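(* Let $\mathbb{F}$ be a finite field with $q$ elements, let $\mathbb{M}$ be the group of complex-valued characters of $\mathbb{F}^*$, and define for $\alpha,\beta\in\mathbb{M}$ \[ \mathbb{J}(\alpha,\beta)=\frac{1}{q-1}\sum_{\substack{x+y=1,\\ x,y\in\mathbb{F}^*}}\alpha(x)\beta(y). \] Then for all $\alpha_1,\alpha_2,\alpha_3,\alpha_4\in\mathbb{M}$, \[ \sum_{\beta\in\mathbb{M}}\mathbb{J}(\alpha_1\beta,\alpha_2\beta^{-1})\,\mathbb{J}(\alpha_3\beta,\alpha_4\beta^{-1})=\mathbb{J}(\alpha_1\alpha_4,\alpha_2\alpha_3). \]
   Context: Products and inverses of characters are pointwise. *)

theory Defs
  imports Complex_Main
begin

text \<open>Complex characters of the multiplicative group of a finite field, represented as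
  functions on the whole field, extended by 0 at 0 (so the set of characters is finite
  and in bijection with Hom(F^*, C^*)).\<close>
definition chars :: "('a::{field,finite} \<Rightarrow> complex) set" where
  "chars = {\<chi>. \<chi> 0 = 0 \<and> \<chi> 1 = 1 \<and>
              (\<forall>x y. x \<noteq> 0 \<longrightarrow> y \<noteq> 0 \<longrightarrow> \<chi> (x * y) = \<chi> x * \<chi> y)}"

definition jacobiJ :: "('a::{field,finite} \<Rightarrow> complex) \<Rightarrow> ('a \<Rightarrow> complex) \<Rightarrow> complex" where
  "jacobiJ \<alpha> \<beta> = (1 / (of_nat (card (UNIV::'a set)) - 1)) *
     (\<Sum>x\<in>{x::'a. x \<noteq> 0 \<and> 1 - x \<noteq> 0}. \<alpha> x * \<beta> (1 - x))"

end

theory Submission imports Defs "HOL-Algebra.Multiplicative_Group" begin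

lemma gen_exists:
  "\<exists>g::'a::{field,finite}. (\<forall>x. x \<noteq> 0 \<longrightarrow> (\<exists>i. x = g^i)) \<and> (\<forall>k. g^k = 1 \<longleftrightarrow> (card (UNIV::'a set) - 1) dvd k)"
proof -
  define R :: "'a ring" where "R = \<lparr>carrier = (UNIV::'a set), monoid.mult = (\<lambda>x y. x * y), one = 1, ring.zero = 0, add = (\<lambda>x y. x + y)\<rparr>"
  have fR: "field R"
  proof -
    have "\<exists>y. x + y = 0" for x :: 'a
      using add.right_inverse by blast
    moreover have "x \<noteq> 0 \<Longrightarrow> \<exists>y. x * y = 1" for x :: 'a
      by (rule exI[of _ "inverse x"]) auto
    ultimately show ?thesis
      unfolding R_def using add.right_inverse
      by unfold_locales (auto simp:algebra_simps Units_def)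
  qed
  interpret field R by (rule fR)
  have pow: "x [^]\<^bsub>R\<^esub> (i::nat) = x^i" for x i
    by (induction i) (simp_all add: R_def)
  have carR: "carrier R = UNIV" by (simp add: R_def)
  have finR: "finite (carrier R)" by (simp add: carR)
  obtain a where a: "a \<in> carrier (mult_of R)" and ca: "carrier (mult_of R) = {a[^]\<^bsub>R\<^esub>i | i::nat. i \<in> UNIV}"
    using finite_field_mult_group_has_gen[OF finR] by blast
  interpret G: group "mult_of R" by (rule field_mult_group)
  have cm: "carrier (mult_of R) = UNIV - {0}" by (simp add: carR R_def)
  have a0: "a \<noteq> 0" using a cm by auto
  have pe: "a [^]\<^bsub>mult_of R\<^esub> (k::nat) = a ^ k" for k
    by (simp add: nat_pow_mult_of pow)
  have one: "\<one>\<^bsub>mult_of R\<^esub> = (1::'a)" by (simp add: R_def)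
  have ordle: "G.ord a \<le> card (UNIV::'a set) - 1"
    using G.ord_le_group_order[OF _ a] finR order_mult_of[OF finR]
    by (simp add: finite_mult_of order_def carR)
  have ord1: "G.ord a \<ge> 1" using G.ord_ge_1 a finR finite_mult_of by blast
  have oe: "{a[^]\<^bsub>mult_of R\<^esub>x | x. x \<in> (UNIV::nat set)} = {a[^]\<^bsub>mult_of R\<^esub>x | x. x \<in> {0 .. G.ord a - 1}}"
    by (rule G.ord_elems[OF _ a]) (simp add: finR finite_mult_of)
  have "carrier (mult_of R) = {a[^]\<^bsub>mult_of R\<^esub>x | x. x \<in> {0 .. G.ord a - 1}}"
    using oe ca unfolding nat_pow_mult_of by simp
  also have "\<dots> = (\<lambda>x. a[^]\<^bsub>mult_of R\<^esub>x) ` {0 .. G.ord a - 1}" by auto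
  finally have "card (carrier (mult_of R)) \<le> card {0 .. G.ord a - 1}"
    by (metis card_image_le finite_atLeastAtMost)
  hence "card (UNIV::'a set) - 1 \<le> G.ord a" using ord1 cm
    by (simp add: card_Diff_singleton carR)
  with ordle have ordn: "G.ord a = card (UNIV::'a set) - 1" by simp
  show ?thesis
  proof (intro exI[of _ a] conjI allI impI)
    fix x :: 'a assume "x \<noteq> 0"
    hence "x \<in> carrier (mult_of R)" using cm by auto
    then obtain i where "x = a [^]\<^bsub>R\<^esub> (i::nat)" using ca by auto
    thus "\<exists>i. x = a ^ i" using pow by auto
  next
    fix k
    show "a ^ k = 1 \<longleftrightarrow> (card (UNIV::'a set) - 1) dvd k"
      using G.pow_eq_id[OF a, of k] pe one ordn by simp
  qed
qed

lemma char_nz: "\<beta> \<in> chars \<Longrightarrow> (x::'a::{field,finite}) \<noteq> 0 \<Longrightarrow> \<beta> x \<noteq> 0"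
proof
  assume b: "\<beta> \<in> chars" and x: "x \<noteq> 0" and e: "\<beta> x = 0"
  have ix: "inverse x \<noteq> 0" using x by simp
  have m: "\<beta> (x * inverse x) = \<beta> x * \<beta> (inverse x)" using b x ix unfolding chars_def by blast
  have "\<beta> (x * inverse x) = 1" using b x unfolding chars_def by simp
  thus False using m e by simp
qed

lemma char_inv: "\<beta> \<in> chars \<Longrightarrow> (x::'a::{field,finite}) \<noteq> 0 \<Longrightarrow> \<beta> (inverse x) = inverse (\<beta> x)"
proof -
  assume b: "\<beta> \<in> chars" and x: "x \<noteq> 0"
  have ix: "inverse x \<noteq> 0" using x by simp
  have m: "\<beta> (x * inverse x) = \<beta> x * \<beta> (inverse x)" using b x ix unfolding chars_def by blast
  have "\<beta> (x * inverse x) = 1" using b x unfolding chars_def by simp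
  hence "\<beta> x * \<beta> (inverse x) = 1" using m by simp
  thus ?thesis by (metis inverse_unique)
qed

lemma char_mul: "\<beta> \<in> chars \<Longrightarrow> (x::'a::{field,finite}) \<noteq> 0 \<Longrightarrow> y \<noteq> 0 \<Longrightarrow> \<beta> (x * y) = \<beta> x * \<beta> y"
  by (simp add: chars_def)

lemma char_pow: "\<beta> \<in> chars \<Longrightarrow> (g::'a::{field,finite}) \<noteq> 0 \<Longrightarrow> \<beta> (g^i) = (\<beta> g)^i"
  by (induction i) (simp_all add: chars_def)

lemma card_ge2: "card (UNIV::'a::{field,finite} set) \<ge> 2"
proof -
  have "card {0::'a, 1} \<le> card (UNIV::'a set)" by (rule card_mono) auto
  thus ?thesis by simp
qed

lemma chars_props:
  defines "n \<equiv> card (UNIV::'a::{field,finite} set) - 1"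
  shows "finite (chars :: ('a \<Rightarrow> complex) set) \<and> card (chars :: ('a \<Rightarrow> complex) set) = n \<and>
     (\<forall>z::'a. z \<noteq> 0 \<longrightarrow> z \<noteq> 1 \<longrightarrow> (\<Sum>\<beta>\<in>chars. \<beta> z) = 0)"
proof -
  have n0: "n > 0" using card_ge2[where 'a='a] by (simp add: n_def)
  obtain g :: 'a where gen: "\<And>x. x \<noteq> 0 \<Longrightarrow> \<exists>i. x = g^i" and gord: "\<And>k. g^k = 1 \<longleftrightarrow> n dvd k"
    using gen_exists[where 'a='a] unfolding n_def by blast
  have gn: "g^n = 1" using gord by simp
  have g0: "g \<noteq> 0"
  proof
    assume "g = 0" thus False using gn n0 by (simp add: power_0_left)
  qed
  define dl where "dl x = (SOME i. x = g^i)" for x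
  have dl: "x = g ^ dl x" if "x \<noteq> 0" for x
    unfolding dl_def using gen[OF that] by (rule someI_ex)
  have cong: "\<omega>^i = \<omega>^j" if "g^i = g^j" "\<omega>^n = (1::complex)" for i j \<omega>
  proof -
    have *: "\<omega>^i = \<omega>^j" if "g^i = g^j" "i \<le> j" for i j
    proof -
      have "g^i * g^(j-i) = g^j" using that(2) by (simp flip: power_add)
      hence "g^i * g^(j-i) = g^i * 1" using that(1) by simp
      hence "g^(j-i) = 1" using g0 by simp
      then obtain t where t: "j - i = n * t" using gord by blast
      have "j = i + n * t" using t that(2) by simp
      hence "\<omega>^j = \<omega>^i * (\<omega>^n)^t" by (simp add: power_add power_mult)
      thus ?thesis using \<open>\<omega>^n = 1\<close> by simp
    qed
    show ?thesis
    proof (cases "i \<le> j")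
      case True thus ?thesis using * that by blast
    next
      case False thus ?thesis using *[of j i] that by simp
    qed
  qed
  let ?R = "{z::complex. z^n = 1}"
  have bij: "bij_betw (\<lambda>\<beta>. \<beta> g) (chars :: ('a \<Rightarrow> complex) set) ?R"
    unfolding bij_betw_def
  proof (intro conjI)
    show "inj_on (\<lambda>\<beta>. \<beta> g) (chars :: ('a \<Rightarrow> complex) set)"
    proof (rule inj_onI)
      fix \<beta>1 \<beta>2 :: "'a \<Rightarrow> complex" assume b: "\<beta>1 \<in> chars" "\<beta>2 \<in> chars" "\<beta>1 g = \<beta>2 g"
      show "\<beta>1 = \<beta>2"
      proof
        fix x show "\<beta>1 x = \<beta>2 x"
        proof (cases "x = 0")
          case True thus ?thesis using b by (simp add: chars_def)
        next
          case False
          then obtain i where "x = g^i" using gen by blast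
          thus ?thesis using b char_pow[OF b(1) g0, of i] char_pow[OF b(2) g0, of i] by simp
        qed
      qed
    qed
    show "(\<lambda>\<beta>. \<beta> g) ` chars = ?R"
    proof
      show "(\<lambda>\<beta>. \<beta> g) ` chars \<subseteq> ?R"
      proof clarify
        fix \<beta> :: "'a \<Rightarrow> complex" assume b: "\<beta> \<in> chars"
        have "(\<beta> g)^n = \<beta> (g^n)" using char_pow[OF b g0] by simp
        also have "g^n = 1" using gord by simp
        finally show "(\<beta> g)^n = 1" using b by (simp add: chars_def)
      qed
    next
      show "?R \<subseteq> (\<lambda>\<beta>. \<beta> g) ` chars"
      proof
        fix \<omega> :: complex assume "\<omega> \<in> ?R"
        hence w: "\<omega>^n = 1" by simp
        define \<chi> where "\<chi> x = (if x = 0 then 0 else \<omega>^(dl x))" for x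
        have "\<chi> \<in> chars"
          unfolding chars_def
        proof (intro CollectI conjI allI impI)
          show "\<chi> 0 = 0" by (simp add: \<chi>_def)
          have "g^(dl 1) = g^0" using dl[of 1] by simp
          hence "\<omega>^(dl 1) = \<omega>^0" by (rule cong[OF _ w])
          thus "\<chi> 1 = 1" by (simp add: \<chi>_def)
        next
          fix x y :: 'a assume xy: "x \<noteq> 0" "y \<noteq> 0"
          have "g^(dl (x*y)) = g^(dl x + dl y)"
            using dl[of "x*y"] dl[OF xy(1)] dl[OF xy(2)] xy by (simp add: power_add)
          hence "\<omega>^(dl (x*y)) = \<omega>^(dl x + dl y)" by (rule cong[OF _ w])
          thus "\<chi> (x * y) = \<chi> x * \<chi> y" using xy by (simp add: \<chi>_def power_add)
        qed
        moreover have "\<chi> g = \<omega>"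
        proof -
          have "g^(dl g) = g^1" using dl[OF g0] by simp
          hence "\<omega>^(dl g) = \<omega>^1" by (rule cong[OF _ w])
          thus ?thesis using g0 by (simp add: \<chi>_def)
        qed
        ultimately show "\<omega> \<in> (\<lambda>\<beta>. \<beta> g) ` chars" by (metis image_eqI)
      qed
    qed
  qed
  have finR: "finite ?R" using n0 by (intro finite_roots_unity) simp
  have fin: "finite (chars :: ('a \<Rightarrow> complex) set)" using bij_betw_finite[OF bij] finR by simp
  have card: "card (chars :: ('a \<Rightarrow> complex) set) = n"
    using bij_betw_same_card[OF bij] card_roots_unity_eq[OF n0] by simp
  have orth: "(\<Sum>\<beta>\<in>chars. \<beta> z) = 0" if z: "z \<noteq> 0" "z \<noteq> 1" for z :: 'a
  proof -
    obtain j where j: "z = g^j" using gen z by blast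
    have ndj: "\<not> n dvd j" using gord j z by simp
    have "(\<Sum>\<beta>\<in>chars. \<beta> z) = (\<Sum>\<beta>\<in>chars. (\<beta> g)^j)"
      using j char_pow g0 by (intro sum.cong) auto
    also have "\<dots> = (\<Sum>\<omega>\<in>?R. \<omega>^j)"
      by (rule sum.reindex_bij_betw[OF bij])
    also have "\<dots> = (\<Sum>k<n. (cis (2 * pi * real k / real n))^j)"
      by (rule sum.reindex_bij_betw[OF bij_betw_roots_unity[OF n0], symmetric])
    also have "\<dots> = (\<Sum>k<n. ((cis (2 * pi / real n))^j)^k)"
    proof (intro sum.cong refl)
      fix k
      have "real j * (2 * pi * real k / real n) = real k * (real j * (2 * pi / real n))" by simp
      thus "(cis (2 * pi * real k / real n))^j = ((cis (2 * pi / real n))^j)^k" by (simp only: DeMoivre)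
    qed
    also have "\<dots> = 0"
    proof -
      define \<omega>0 where "\<omega>0 = cis (2 * pi / real n)"
      have w0n: "\<omega>0^n = 1" using n0 by (simp add: \<omega>0_def DeMoivre)
      have "\<omega>0^j = \<omega>0^(n * (j div n) + j mod n)" by (simp only: mult_div_mod_eq)
      also have "\<dots> = \<omega>0^(j mod n)" by (simp only: power_add power_mult w0n power_one mult_1)
      finally have e1: "\<omega>0^j = \<omega>0^(j mod n)" .
      have jm: "j mod n < n" "j mod n \<noteq> 0" using n0 ndj by (auto simp: dvd_eq_mod_eq_0)
      have inj: "inj_on (\<lambda>k. cis (2 * pi * real k / real n)) {..<n}"
        using bij_betw_roots_unity[OF n0] by (simp add: bij_betw_def)
      have "cis (2 * pi * real (j mod n) / real n) \<noteq> cis (2 * pi * real 0 / real n)"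
      proof
        assume "cis (2 * pi * real (j mod n) / real n) = cis (2 * pi * real 0 / real n)"
        hence "j mod n = 0" using inj_onD[OF inj] jm n0 by blast
        thus False using jm by simp
      qed
      moreover have "\<omega>0^(j mod n) = cis (2 * pi * real (j mod n) / real n)" by (simp add: \<omega>0_def DeMoivre mult.commute)
      ultimately have "\<omega>0^(j mod n) \<noteq> 1" by simp
      hence c1: "\<omega>0^j \<noteq> 1" using e1 by simp
      have "(\<omega>0^j)^n = \<omega>0^(j*n)" by (rule power_mult[symmetric])
      also have "\<dots> = (\<omega>0^n)^j" by (simp only: mult.commute[of j n] power_mult)
      also have "\<dots> = 1" using w0n by simp
      finally have "(\<omega>0^j)^n = 1" .
      thus ?thesis using geometric_sum[OF c1, of n] by (simp add: \<omega>0_def)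
    qed
    finally show ?thesis .
  qed
  show ?thesis using fin card orth by blast
qed


theorem mainTheorem4:
  fixes \<alpha>1 \<alpha>2 \<alpha>3 \<alpha>4 :: "'a::{field,finite} \<Rightarrow> complex"
  assumes "\<alpha>1 \<in> chars" "\<alpha>2 \<in> chars" "\<alpha>3 \<in> chars" "\<alpha>4 \<in> chars"
  shows "(\<Sum>\<beta>\<in>chars.
            jacobiJ (\<lambda>x. \<alpha>1 x * \<beta> x) (\<lambda>x. \<alpha>2 x * inverse (\<beta> x)) *
            jacobiJ (\<lambda>x. \<alpha>3 x * \<beta> x) (\<lambda>x. \<alpha>4 x * inverse (\<beta> x)))
         = jacobiJ (\<lambda>x. \<alpha>1 x * \<alpha>4 x) (\<lambda>x. \<alpha>2 x * \<alpha>3 x)"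
proof -
  define n where "n = card (UNIV::'a set) - 1"
  have CP: "finite (chars :: ('a \<Rightarrow> complex) set) \<and> card (chars :: ('a \<Rightarrow> complex) set) = n \<and>
     (\<forall>z::'a. z \<noteq> 0 \<longrightarrow> z \<noteq> 1 \<longrightarrow> (\<Sum>\<beta>\<in>chars. \<beta> z) = 0)"
    unfolding n_def by (rule chars_props)
  have finC: "finite (chars :: ('a \<Rightarrow> complex) set)" using CP by blast
  have cardC: "card (chars :: ('a \<Rightarrow> complex) set) = n" using CP by blast
  have orth: "\<And>z::'a. z \<noteq> 0 \<Longrightarrow> z \<noteq> 1 \<Longrightarrow> (\<Sum>\<beta>\<in>chars. \<beta> z) = 0" using CP by blast
  have c2: "card (UNIV::'a set) \<ge> 2" by (rule card_ge2)
  define N :: complex where "N = of_nat (card (UNIV::'a set)) - 1"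
  have NN: "N = of_nat n" using c2 by (simp add: N_def n_def of_nat_diff)
  have N0: "N \<noteq> 0" using c2 by (simp add: NN n_def)
  define S where "S = {x::'a. x \<noteq> 0 \<and> 1 - x \<noteq> 0}"
  have finS: "finite S" by simp
  have J: "jacobiJ f h = (1/N) * (\<Sum>x\<in>S. f x * h (1-x))" for f h :: "'a \<Rightarrow> complex"
    by (simp add: jacobiJ_def N_def S_def)
  define A where "A x = \<alpha>1 x * \<alpha>2 (1-x)" for x
  define B where "B y = \<alpha>3 y * \<alpha>4 (1-y)" for y
  define w where "w x y = x * y * inverse (1-x) * inverse (1-y)" for x y :: 'a
  have wchar: "\<beta> (w x y) = \<beta> x * \<beta> y * inverse (\<beta> (1-x)) * inverse (\<beta> (1-y))"
    if b: "\<beta> \<in> chars" and xy: "x \<in> S" "y \<in> S" for \<beta> x y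
  proof -
    have nz: "x \<noteq> 0" "y \<noteq> 0" "1 - x \<noteq> 0" "1 - y \<noteq> 0" using xy by (auto simp: S_def)
    have "\<beta> (w x y) = \<beta> (x * y * inverse (1-x)) * \<beta> (inverse (1-y))"
      unfolding w_def using nz by (intro char_mul[OF b]) auto
    also have "\<beta> (x * y * inverse (1-x)) = \<beta> (x * y) * \<beta> (inverse (1-x))"
      using nz by (intro char_mul[OF b]) auto
    also have "\<beta> (x * y) = \<beta> x * \<beta> y" using nz by (intro char_mul[OF b]) auto
    finally show ?thesis using nz char_inv[OF b] by simp
  qed
  have prod: "jacobiJ (\<lambda>x. \<alpha>1 x * \<beta> x) (\<lambda>x. \<alpha>2 x * inverse (\<beta> x)) *
            jacobiJ (\<lambda>x. \<alpha>3 x * \<beta> x) (\<lambda>x. \<alpha>4 x * inverse (\<beta> x))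
      = (1/N)^2 * (\<Sum>x\<in>S. \<Sum>y\<in>S. A x * B y * \<beta> (w x y))" if b: "\<beta> \<in> chars" for \<beta>
  proof -
    have "jacobiJ (\<lambda>x. \<alpha>1 x * \<beta> x) (\<lambda>x. \<alpha>2 x * inverse (\<beta> x)) *
            jacobiJ (\<lambda>x. \<alpha>3 x * \<beta> x) (\<lambda>x. \<alpha>4 x * inverse (\<beta> x))
      = (1/N)^2 * ((\<Sum>x\<in>S. \<alpha>1 x * \<beta> x * (\<alpha>2 (1-x) * inverse (\<beta> (1-x)))) *
                   (\<Sum>y\<in>S. \<alpha>3 y * \<beta> y * (\<alpha>4 (1-y) * inverse (\<beta> (1-y)))))"
      unfolding J by (simp add: power2_eq_square)
    also have "\<dots> = (1/N)^2 * (\<Sum>x\<in>S. \<Sum>y\<in>S. A x * B y * \<beta> (w x y))"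
      unfolding sum_product
      by (intro arg_cong[where f="\<lambda>t. (1/N)^2 * t"] sum.cong refl)
         (simp add: wchar[OF b] A_def B_def)
    finally show ?thesis .
  qed
  have inner: "(\<Sum>\<beta>\<in>chars. \<beta> (w x y)) = (if y = 1 - x then N else 0)"
    if xy: "x \<in> S" "y \<in> S" for x y
  proof -
    have nz: "x \<noteq> 0" "y \<noteq> 0" "1 - x \<noteq> 0" "1 - y \<noteq> 0" using xy by (auto simp: S_def)
    show ?thesis
    proof (cases "y = 1 - x")
      case True
      have "w x y = 1" unfolding True w_def using nz(1,3) by (simp add: field_simps)
      hence "(\<Sum>\<beta>\<in>chars. \<beta> (w x y)) = (\<Sum>\<beta>\<in>(chars :: ('a \<Rightarrow> complex) set). 1)"
        by (intro sum.cong refl) (simp add: chars_def)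
      also have "\<dots> = N" using cardC NN by simp
      finally show ?thesis using True by simp
    next
      case False
      have w0: "w x y \<noteq> 0" using nz by (simp add: w_def)
      have w1: "w x y \<noteq> 1"
      proof
        assume "w x y = 1"
        hence "x * y = (1 - x) * (1 - y)" using nz by (simp add: w_def field_simps)
        hence "y = 1 - x" by (simp add: algebra_simps)
        thus False using False by simp
      qed
      show ?thesis using orth[OF w0 w1] False by simp
    qed
  qed
  have "(\<Sum>\<beta>\<in>chars.
            jacobiJ (\<lambda>x. \<alpha>1 x * \<beta> x) (\<lambda>x. \<alpha>2 x * inverse (\<beta> x)) *
            jacobiJ (\<lambda>x. \<alpha>3 x * \<beta> x) (\<lambda>x. \<alpha>4 x * inverse (\<beta> x)))
       = (\<Sum>\<beta>\<in>chars. (1/N)^2 * (\<Sum>x\<in>S. \<Sum>y\<in>S. A x * B y * \<beta> (w x y)))"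
    by (intro sum.cong refl prod)
  also have "\<dots> = (1/N)^2 * (\<Sum>x\<in>S. \<Sum>y\<in>S. A x * B y * (\<Sum>\<beta>\<in>chars. \<beta> (w x y)))"
    by (simp add: sum_distrib_left sum_distrib_right sum.swap[of _ chars] mult.assoc)
  also have "\<dots> = (1/N)^2 * (\<Sum>x\<in>S. \<Sum>y\<in>S. (if y = 1 - x then A x * B y * N else 0))"
    by (intro arg_cong[where f="\<lambda>t. (1/N)^2 * t"] sum.cong refl) (simp add: inner)
  also have "\<dots> = (1/N)^2 * (\<Sum>x\<in>S. A x * B (1 - x) * N)"
  proof (intro arg_cong[where f="\<lambda>t. (1/N)^2 * t"] sum.cong refl)
    fix x assume "x \<in> S"
    hence "1 - x \<in> S" by (simp add: S_def)
    thus "(\<Sum>y\<in>S. (if y = 1 - x then A x * B y * N else 0)) = A x * B (1 - x) * N"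
      using finS by (simp add: sum.delta)
  qed
  also have "\<dots> = (1/N) * (\<Sum>x\<in>S. \<alpha>1 x * \<alpha>4 x * (\<alpha>2 (1-x) * \<alpha>3 (1-x)))"
    using N0 by (simp add: A_def B_def power2_eq_square sum_distrib_left sum_distrib_right mult_ac)
  also have "\<dots> = jacobiJ (\<lambda>x. \<alpha>1 x * \<alpha>4 x) (\<lambda>x. \<alpha>2 x * \<alpha>3 x)"
    by (simp add: J)
  finally show ?thesis .
qed

end
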